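(* Let $G$ be a simple graph having two edges with no common end. Then $(\lambda-1)^2$ divides $P(\mathcal{H}_{\bullet G},\lambda)$.
   Context: A hypergraph $\mathcal{H}=(\mathcal{V},\mathcal{E})$ consists of a finite vertex set $\mathcal{V}$ and a set $\mathcal{E}$ of subsets of $\mathcal{V}$, each of size at least $1$, called edges. For a positive integer $\lambda$, a weak proper $\lambda$-colouring of $\mathcal{H}$ is a map $\phi:\mathcal{V}\to\{1,\dots,\lambda\}$ such that $|\{\phi(v):v\in e\}|>1$ for every $e\in\mathcal{E}$. $P(\mathcal{H},\lambda)$ denotes the number of weak proper $\lambda$-colourings; it is a polynomial in $\lambda$. For a simple graph $G=(V,E)$, $\mathcal{H}_{\bullet G}$ is the hypergraph with vertex set $V\cup\{w\}$, $w\notin V$ a new vertex, and edge set $\{\{u,v,w\}:uv\in E\}$. *)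

theory Defs
  imports "HOL-Library.FuncSet" "HOL-Computational_Algebra.Polynomial"
begin

definition weak_proper_colourings :: "'a set \<Rightarrow> 'a set set \<Rightarrow> nat \<Rightarrow> ('a \<Rightarrow> nat) set" where
  "weak_proper_colourings VV EE lam =
     {\<phi> \<in> VV \<rightarrow>\<^sub>E {1..lam}. \<forall>e\<in>EE. card (\<phi> ` e) > 1}"

definition num_weak_colourings :: "'a set \<Rightarrow> 'a set set \<Rightarrow> nat \<Rightarrow> nat" where
  "num_weak_colourings VV EE lam = card (weak_proper_colourings VV EE lam)"

definition hyp_chrom_poly :: "'a set \<Rightarrow> 'a set set \<Rightarrow> int poly" where
  "hyp_chrom_poly VV EE =
     (THE p. \<forall>lam::nat. lam \<ge> 1 \<longrightarrow> poly p (int lam) = int (num_weak_colourings VV EE lam))"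

definition simple_graph :: "'a set \<Rightarrow> 'a set set \<Rightarrow> bool" where
  "simple_graph V E \<longleftrightarrow> finite V \<and> (\<forall>e\<in>E. e \<subseteq> V \<and> card e = 2)"

text \<open>The cone hypergraph H_{\<bullet>G}: new vertex w = None, vertices Some v for v in V,
  edges {u, v, w} for each edge uv of G.\<close>

definition cone_vertices :: "'a set \<Rightarrow> 'a option set" where
  "cone_vertices V = insert None (Some ` V)"

definition cone_edges :: "'a set set \<Rightarrow> 'a option set set" where
  "cone_edges E = (\<lambda>e. insert None (Some ` e)) ` E"

end

theory Submission
  imports Defs
begin

definition Idx :: "'a set \<Rightarrow> 'a set set \<Rightarrow> 'a set set" where
  "Idx V E = {S. S \<subseteq> V \<and> (\<forall>e\<in>E. \<not> e \<subseteq> S)}"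

definition FF :: "'a set \<Rightarrow> nat \<Rightarrow> nat \<Rightarrow> 'a set \<Rightarrow> ('a option \<Rightarrow> nat) set" where
  "FF V lam c S = PiE (cone_vertices V) (\<lambda>y. case y of None \<Rightarrow> {c} | Some x \<Rightarrow> if x \<in> S then {c} else {1..lam} - {c})"

lemma set_eq:
  assumes sg: "simple_graph V E"
  shows "weak_proper_colourings (cone_vertices V) (cone_edges E) lam
       = (\<Union>p\<in>{1..lam} \<times> Idx V E. FF V lam (fst p) (snd p))"
proof (intro equalityI subsetI)
  fix \<phi> assume h: "\<phi> \<in> weak_proper_colourings (cone_vertices V) (cone_edges E) lam"
  hence pi: "\<phi> \<in> cone_vertices V \<rightarrow>\<^sub>E {1..lam}" and ed: "\<forall>e\<in>cone_edges E. card (\<phi> ` e) > 1"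
    by (auto simp: weak_proper_colourings_def)
  define c where "c = \<phi> None"
  define S where "S = {x\<in>V. \<phi> (Some x) = c}"
  have c: "c \<in> {1..lam}" using pi by (auto simp: c_def cone_vertices_def)
  have S: "S \<in> Idx V E"
  proof -
    { fix e assume e: "e \<in> E" "e \<subseteq> S"
      have "insert None (Some ` e) \<in> cone_edges E" using e by (auto simp: cone_edges_def)
      hence "card (\<phi> ` insert None (Some ` e)) > 1" using ed by blast
      moreover have "\<phi> ` insert None (Some ` e) \<subseteq> {c}" using e by (auto simp: S_def c_def)
      hence "card (\<phi> ` insert None (Some ` e)) \<le> 1"
        using card_mono[of "{c}"] by fastforce
      ultimately have False by simp }
    thus ?thesis by (auto simp: Idx_def S_def)
  qed
  have "\<phi> \<in> FF V lam c S"
    using pi unfolding FF_def PiE_iff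
    by (auto simp: cone_vertices_def S_def c_def split: option.splits)
  thus "\<phi> \<in> (\<Union>p\<in>{1..lam} \<times> Idx V E. FF V lam (fst p) (snd p))" using c S by force
next
  fix \<phi> assume "\<phi> \<in> (\<Union>p\<in>{1..lam} \<times> Idx V E. FF V lam (fst p) (snd p))"
  then obtain c S where c: "c \<in> {1..lam}" and S: "S \<in> Idx V E" and f: "\<phi> \<in> FF V lam c S" by auto
  have fB: "\<forall>y\<in>cone_vertices V. \<phi> y \<in> (case y of None \<Rightarrow> {c} | Some x \<Rightarrow> if x \<in> S then {c} else {1..lam} - {c})"
    and fext: "\<phi> \<in> extensional (cone_vertices V)" using f unfolding FF_def PiE_iff by auto
  have "\<phi> y \<in> {1..lam}" if y: "y \<in> cone_vertices V" for y
  proof (cases y)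
    case None then show ?thesis using fB y c by auto
  next
    case (Some x) then show ?thesis using fB y c by (cases "x \<in> S") auto
  qed
  hence pi: "\<phi> \<in> cone_vertices V \<rightarrow>\<^sub>E {1..lam}" using fext by (auto simp: PiE_iff)
  have "card (\<phi> ` e') > 1" if e'E: "e' \<in> cone_edges E" for e'
  proof -
    obtain e where e: "e \<in> E" "e' = insert None (Some ` e)" using e'E by (auto simp: cone_edges_def)
    have eV: "e \<subseteq> V" and fe: "finite e" using sg e by (auto simp: simple_graph_def intro: card_ge_0_finite)
    obtain x where x: "x \<in> e" "x \<notin> S" using S e by (auto simp: Idx_def)
    have "\<phi> None = c" using f by (auto simp: FF_def cone_vertices_def PiE_iff)
    moreover have "\<phi> (Some x) \<noteq> c"
    proof -
      have "x \<in> V" using x eV by auto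
      hence "\<phi> (Some x) \<in> {1..lam} - {c}" using fB x by (auto simp: cone_vertices_def)
      thus ?thesis by auto
    qed
    ultimately have "{\<phi> None, \<phi> (Some x)} \<subseteq> \<phi> ` e'" "card {\<phi> None, \<phi> (Some x)} = 2"
      using e x by auto
    moreover have "finite (\<phi> ` e')" using fe e by auto
    ultimately show ?thesis using card_mono[of "\<phi> ` e'" "{\<phi> None, \<phi> (Some x)}"] by linarith
  qed
  thus "\<phi> \<in> weak_proper_colourings (cone_vertices V) (cone_edges E) lam"
    using pi by (auto simp: weak_proper_colourings_def)
qed


lemma FF_info:
  assumes "\<phi> \<in> FF V lam c S" "S \<subseteq> V"
  shows "\<phi> None = c" "S = {x\<in>V. \<phi> (Some x) = c}"
proof -
  have fB: "\<forall>y\<in>cone_vertices V. \<phi> y \<in> (case y of None \<Rightarrow> {c} | Some x \<Rightarrow> if x \<in> S then {c} else {1..lam} - {c})"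
    using assms(1) unfolding FF_def PiE_iff by auto
  show "\<phi> None = c" using fB by (auto simp: cone_vertices_def)
  have "\<phi> (Some x) = c \<longleftrightarrow> x \<in> S" if "x \<in> V" for x
  proof -
    have "\<phi> (Some x) \<in> (if x \<in> S then {c} else {1..lam} - {c})" using fB that by (auto simp: cone_vertices_def)
    thus ?thesis by (cases "x \<in> S") auto
  qed
  thus "S = {x\<in>V. \<phi> (Some x) = c}" using assms(2) by auto
qed

lemma card_FF:
  assumes "finite V" "S \<subseteq> V" "c \<in> {1..lam}"
  shows "card (FF V lam c S) = (lam - 1) ^ (card V - card S)"
proof -
  define B where "B = (\<lambda>y. case y of None \<Rightarrow> {c} | Some x \<Rightarrow> if x \<in> S then {c} else {1..lam} - {c})"
  have fin: "finite (cone_vertices V)" using assms by (simp add: cone_vertices_def)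
  have "card (FF V lam c S) = (\<Prod>y\<in>cone_vertices V. card (B y))"
    unfolding FF_def B_def[symmetric] by (rule card_PiE[OF fin])
  also have "\<dots> = card (B None) * (\<Prod>y\<in>Some ` V. card (B y))"
    unfolding cone_vertices_def using assms by (subst prod.insert) auto
  also have "(\<Prod>y\<in>Some ` V. card (B y)) = (\<Prod>x\<in>V. card (B (Some x)))"
    by (subst prod.reindex) auto
  also have "\<dots> = (\<Prod>x\<in>V. if x \<in> S then 1 else lam - 1)"
  proof (rule prod.cong)
    fix x assume "x \<in> V"
    show "card (B (Some x)) = (if x \<in> S then 1 else lam - 1)"
    proof (cases "x \<in> S")
      case True thus ?thesis by (simp add: B_def)
    next
      case False
      have "card ({1..lam} - {c}) = lam - 1" using assms(3) by (simp add: card_Diff_singleton)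
      thus ?thesis using False by (simp add: B_def)
    qed
  qed simp
  also have "\<dots> = (lam - 1) ^ (card V - card S)"
  proof -
    have "(\<Prod>x\<in>V. if x \<in> S then 1 else lam - 1) = (\<Prod>x\<in>V - S. lam - 1)"
      using assms by (subst prod.If_cases) (auto simp: Diff_eq)
    also have "\<dots> = (lam - 1) ^ (card V - card S)"
      using assms by (simp add: card_Diff_subset finite_subset)
    finally show ?thesis .
  qed
  finally show ?thesis by (simp add: B_def)
qed


lemma count_eq:
  assumes sg: "simple_graph V E"
  shows "num_weak_colourings (cone_vertices V) (cone_edges E) lam
       = lam * (\<Sum>S\<in>Idx V E. (lam - 1) ^ (card V - card S))"
proof -
  have fV: "finite V" using sg by (simp add: simple_graph_def)
  have fI: "finite (Idx V E)"
  proof (rule finite_subset[of _ "Pow V"])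
    show "Idx V E \<subseteq> Pow V" by (auto simp: Idx_def)
    show "finite (Pow V)" using fV by simp
  qed
  have "num_weak_colourings (cone_vertices V) (cone_edges E) lam
      = card (\<Union>p\<in>{1..lam} \<times> Idx V E. FF V lam (fst p) (snd p))"
    unfolding num_weak_colourings_def set_eq[OF sg] ..
  also have "\<dots> = (\<Sum>p\<in>{1..lam} \<times> Idx V E. card (FF V lam (fst p) (snd p)))"
  proof (rule card_UN_disjoint)
    show "finite ({1..lam} \<times> Idx V E)" using fI by simp
    show "\<forall>i\<in>{1..lam} \<times> Idx V E. finite (FF V lam (fst i) (snd i))"
      using fV by (auto simp: FF_def cone_vertices_def intro!: finite_PiE)
    show "\<forall>i\<in>{1..lam} \<times> Idx V E. \<forall>j\<in>{1..lam} \<times> Idx V E. i \<noteq> j \<longrightarrow>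
        FF V lam (fst i) (snd i) \<inter> FF V lam (fst j) (snd j) = {}"
    proof (intro ballI impI)
      fix i j assume i: "i \<in> {1..lam} \<times> Idx V E" and j: "j \<in> {1..lam} \<times> Idx V E" and ne: "i \<noteq> j"
      show "FF V lam (fst i) (snd i) \<inter> FF V lam (fst j) (snd j) = {}"
      proof (rule ccontr)
        assume "FF V lam (fst i) (snd i) \<inter> FF V lam (fst j) (snd j) \<noteq> {}"
        then obtain \<phi> where a: "\<phi> \<in> FF V lam (fst i) (snd i)" and b: "\<phi> \<in> FF V lam (fst j) (snd j)" by blast
        have si: "snd i \<subseteq> V" and sj: "snd j \<subseteq> V" using i j by (auto simp: Idx_def)
        have "fst i = fst j" using FF_info(1)[OF a si] FF_info(1)[OF b sj] by simp
        moreover have "snd i = snd j" using FF_info(2)[OF a si] FF_info(2)[OF b sj] \<open>fst i = fst j\<close> by simp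
        ultimately show False using ne by (simp add: prod_eq_iff)
      qed
    qed
  qed
  also have "\<dots> = (\<Sum>p\<in>{1..lam} \<times> Idx V E. (lam - 1) ^ (card V - card (snd p)))"
  proof (rule sum.cong[OF refl])
    fix p assume p: "p \<in> {1..lam} \<times> Idx V E"
    hence "snd p \<subseteq> V" "fst p \<in> {1..lam}" by (auto simp: Idx_def)
    thus "card (FF V lam (fst p) (snd p)) = (lam - 1) ^ (card V - card (snd p))"
      by (rule card_FF[OF fV])
  qed
  also have "\<dots> = (\<Sum>c\<in>{1..lam}. \<Sum>S\<in>Idx V E. (lam - 1) ^ (card V - card S))"
    by (subst sum.cartesian_product) (simp add: case_prod_beta)
  also have "\<dots> = lam * (\<Sum>S\<in>Idx V E. (lam - 1) ^ (card V - card S))" by simp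
  finally show ?thesis .
qed

definition the_poly :: "'a set \<Rightarrow> 'a set set \<Rightarrow> int poly" where
  "the_poly V E = [:0, 1:] * (\<Sum>S\<in>Idx V E. [:-1, 1:] ^ (card V - card S))"

lemma poly_the_poly:
  assumes sg: "simple_graph V E" and lam: "lam \<ge> 1"
  shows "poly (the_poly V E) (int lam) = int (num_weak_colourings (cone_vertices V) (cone_edges E) lam)"
  proof -
  have "poly (the_poly V E) (int lam) = int lam * (\<Sum>S\<in>Idx V E. (int lam - 1) ^ (card V - card S))"
    by (simp add: the_poly_def poly_sum)
  also have "\<dots> = int (lam * (\<Sum>S\<in>Idx V E. (lam - 1) ^ (card V - card S)))"
    using lam by (simp add: of_nat_diff)
  finally show ?thesis by (simp add: count_eq[OF sg])
qed

lemma unique_poly: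
  fixes p q :: "int poly"
  assumes "\<forall>lam::nat. lam \<ge> 1 \<longrightarrow> poly p (int lam) = poly q (int lam)"
  shows "p = q"
proof (rule ccontr)
  assume "p \<noteq> q"
  hence "p - q \<noteq> 0" by simp
  hence fin: "finite {x. poly (p - q) x = 0}" by (rule poly_roots_finite)
  have "int ` {1..} \<subseteq> {x. poly (p - q) x = 0}" using assms by auto
  hence "finite (int ` {1::nat..})" using fin finite_subset by blast
  hence "finite {1::nat..}" by (rule finite_imageD) (simp add: inj_on_def)
  thus False using infinite_Ici by blast
qed

lemma hyp_poly_eq:
  assumes sg: "simple_graph V E"
  shows "hyp_chrom_poly (cone_vertices V) (cone_edges E) = the_poly V E"
  unfolding hyp_chrom_poly_def
proof (rule the_equality)
  show "\<forall>lam::nat. lam \<ge> 1 \<longrightarrow> poly (the_poly V E) (int lam) = int (num_weak_colourings (cone_vertices V) (cone_edges E) lam)"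
    using poly_the_poly[OF sg] by blast
next
  fix p assume "\<forall>lam::nat. lam \<ge> 1 \<longrightarrow> poly p (int lam) = int (num_weak_colourings (cone_vertices V) (cone_edges E) lam)"
  thus "p = the_poly V E" using poly_the_poly[OF sg] by (intro unique_poly) auto
qed

theorem mainTheorem18:
  fixes V :: "'a set" and E :: "'a set set"
  assumes "simple_graph V E"
    and "\<exists>e1\<in>E. \<exists>e2\<in>E. e1 \<inter> e2 = {}"
  shows "[:-1, 1:] ^ 2 dvd hyp_chrom_poly (cone_vertices V) (cone_edges E)"
proof -
  obtain e1 e2 where e: "e1 \<in> E" "e2 \<in> E" "e1 \<inter> e2 = {}" using assms(2) by blast
  have fV: "finite V" using assms(1) by (simp add: simple_graph_def)
  have "2 \<le> card V - card S" if S: "S \<in> Idx V E" for S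
  proof -
    have SV: "S \<subseteq> V" and n1: "\<not> e1 \<subseteq> S" and n2: "\<not> e2 \<subseteq> S" using S e by (auto simp: Idx_def)
    have eV: "e1 \<subseteq> V" "e2 \<subseteq> V" using assms(1) e by (auto simp: simple_graph_def)
    obtain x1 where x1: "x1 \<in> e1" "x1 \<notin> S" using n1 by blast
    obtain x2 where x2: "x2 \<in> e2" "x2 \<notin> S" using n2 by blast
    have "x1 \<noteq> x2" using x1 x2 e(3) by blast
    hence "{x1, x2} \<subseteq> V - S" "card {x1, x2} = 2" using x1 x2 eV by auto
    hence "2 \<le> card (V - S)" using fV by (metis card_mono finite_Diff)
    thus ?thesis using SV fV by (simp add: card_Diff_subset finite_subset)
  qed
  hence "[:-1, 1:] ^ 2 dvd (\<Sum>S\<in>Idx V E. [:-1, 1:] ^ (card V - card S) :: int poly)"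
    by (intro dvd_sum le_imp_power_dvd) auto
  hence "[:-1, 1:] ^ 2 dvd the_poly V E" unfolding the_poly_def by (rule dvd_mult)
  thus ?thesis using hyp_poly_eq[OF assms(1)] by simp
qed

end
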